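(* Let $n$ be a positive integer and let $\pi$ be chosen uniformly at random from the permutations of $[n]$ all of whose cycle lengths are odd. For an odd positive integer $k\le n$, let $Y_k$ be the number of elements of $[n]$ lying in $k$-cycles of $\pi$. Then \[ \mathbb{E}_o^{(n)}Y_k=\begin{cases}\dfrac{n(n-2)\cdots(n-k+1)}{(n-1)(n-3)\cdots(n-k)}, & n\text{ even},\\[2ex] \dfrac{(n-1)(n-3)\cdots(n-k+2)}{(n-2)(n-4)\cdots(n-k+1)}, & n\text{ odd},\end{cases} \] where an empty product equals $1$.
   Context: $\mathbb{E}_o^{(n)}$ denotes expectation under the uniform measure on permutations of $[n]$ with all cycle lengths odd. $Y_k=kX_k$, where $X_k$ is the number of $k$-cycles. *)

theory Defs
  imports Complex_Main "HOL-Combinatorics.Orbits"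
begin

definition odd_perms :: "nat \<Rightarrow> (nat \<Rightarrow> nat) set" where
  "odd_perms n = {p. p permutes {1..n} \<and> (\<forall>x\<in>{1..n}. odd (card (orbit p x)))}"

definition Y :: "nat \<Rightarrow> nat \<Rightarrow> (nat \<Rightarrow> nat) \<Rightarrow> nat" where
  "Y n k p = card {x \<in> {1..n}. card (orbit p x) = k}"

definition E_odd :: "nat \<Rightarrow> ((nat \<Rightarrow> nat) \<Rightarrow> real) \<Rightarrow> real" where
  "E_odd n f = (\<Sum>p\<in>odd_perms n. f p) / real (card (odd_perms n))"

end

theory Submission
  imports Defs "HOL-Combinatorics.Cycles"
begin


definition OP :: "'a set \<Rightarrow> ('a \<Rightarrow> 'a) set" where
  "OP S = {p. p permutes S \<and> (\<forall>x\<in>S. odd (card (orbit p x)))}"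

lemma cyc_funpow_nth:
  assumes "distinct cs" "j < length cs"
  shows "(cycle_of_list cs ^^ i) (cs ! j) = cs ! ((i + j) mod length cs)"
proof -
  have "map (cycle_of_list cs ^^ i) cs ! j = rotate i cs ! j"
    using cyclic_rotation[OF assms(1), of i] by simp
  then show ?thesis using assms by (simp add: nth_rotate)
qed

lemma cyc_in_set: "y \<in> set cs \<Longrightarrow> cycle_of_list cs y \<in> set cs"
  using cycle_permutes[of cs] by (simp add: permutes_in_image)

lemma orbit_cyc:
  assumes "distinct cs" "y \<in> set cs"
  shows "orbit (cycle_of_list cs) y = set cs"
proof -
  obtain j where j: "j < length cs" "y = cs ! j" using assms(2) by (auto simp: in_set_conv_nth)
  have "orbit (cycle_of_list cs) y = {(cycle_of_list cs ^^ n) y | n. True}"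
    by (rule orbit_altdef_permutation[OF permutation_of_cycle])
  also have "\<dots> = set cs"
  proof (intro set_eqI iffI)
    fix z assume "z \<in> {(cycle_of_list cs ^^ n) y | n. True}"
    then obtain n where "z = (cycle_of_list cs ^^ n) y" by auto
    moreover from j(1) have "length cs > 0" by linarith
    ultimately show "z \<in> set cs" using j assms cyc_funpow_nth[OF assms(1) j(1), of n] by auto
  next
    fix z assume "z \<in> set cs"
    then obtain i where i: "i < length cs" "z = cs ! i" by (auto simp: in_set_conv_nth)
    have "(cycle_of_list cs ^^ (i + length cs - j)) y = cs ! ((i + length cs - j + j) mod length cs)"
      using cyc_funpow_nth[OF assms(1) j(1)] j by simp
    also have "\<dots> = z" using i j by simp
    finally show "z \<in> {(cycle_of_list cs ^^ n) y | n. True}" by blast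
  qed
  finally show ?thesis .
qed

locale glue =
  fixes S :: "'a set" and cs :: "'a list" and q :: "'a \<Rightarrow> 'a"
  assumes fin: "finite S" and dist: "distinct cs" and sub: "set cs \<subseteq> S"
    and qp: "q permutes (S - set cs)"
begin

definition "p = cycle_of_list cs \<circ> q"

lemma p_in: "y \<in> set cs \<Longrightarrow> p y = cycle_of_list cs y"
  using qp by (simp add: p_def permutes_not_in)

lemma p_out: "y \<notin> set cs \<Longrightarrow> p y = q y"
proof -
  assume y: "y \<notin> set cs"
  have "q y \<notin> set cs"
  proof (cases "y \<in> S")
    case True then show ?thesis using y permutes_in_image[OF qp, of y] by auto
  next
    case False then show ?thesis using y by (simp add: permutes_not_in[OF qp])
  qed
  then show ?thesis by (simp add: p_def id_outside_supp)
qed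

lemma p_permutes: "p permutes S"
proof -
  have "cycle_of_list cs permutes S" using cycle_permutes permutes_subset sub by blast
  moreover have "q permutes S" using qp permutes_subset by blast
  ultimately show ?thesis unfolding p_def by (rule permutes_compose[rotated])
qed

lemma orbit_p_in: "y \<in> set cs \<Longrightarrow> orbit p y = set cs"
proof -
  assume y: "y \<in> set cs"
  have "orbit p y = orbit (cycle_of_list cs) y"
    by (rule orbit_cong0[OF y]) (auto simp: p_in cyc_in_set)
  then show ?thesis using orbit_cyc[OF dist y] by simp
qed

lemma orbit_p_out: "y \<in> S - set cs \<Longrightarrow> orbit p y = orbit q y"
proof -
  have "\<And>x. x \<in> S - set cs \<Longrightarrow> q x \<in> S - set cs" using permutes_in_image[OF qp] by blast
  then show "y \<in> S - set cs \<Longrightarrow> orbit p y = orbit q y"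
    by (intro orbit_cong0[where A="S - set cs"]) (auto simp: p_out)
qed

lemma funpow_p: "y \<in> set cs \<Longrightarrow> (p ^^ i) y = (cycle_of_list cs ^^ i) y"
proof (induction i)
  case (Suc i)
  have "(cycle_of_list cs ^^ i) y \<in> set cs"
    using orbit_cyc[OF dist Suc.prems] Suc.prems
    by (metis funpow_in_orbit permutation_of_cycle permutation_self_in_orbit)
  then show ?case using Suc by (simp add: p_in)
qed simp

lemma support_p:
  assumes "cs \<noteq> []"
  shows "support p (hd cs) = cs"
proof -
  let ?x = "hd cs"
  have x: "?x = cs ! 0" "?x \<in> set cs" using assms by (auto simp: hd_conv_nth)
  have pw: "(p ^^ i) ?x = cs ! (i mod length cs)" for i
    using funpow_p[OF x(2)] cyc_funpow_nth[OF dist, of 0 i] assms x by simp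
  have lp: "least_power p ?x = length cs"
  proof -
    have "(p ^^ length cs) ?x = ?x" using pw[of "length cs"] x by simp
    moreover have "length cs > 0" using assms by simp
    ultimately have le: "least_power p ?x \<le> length cs" and gt: "least_power p ?x > 0"
      and eq: "(p ^^ least_power p ?x) ?x = ?x"
      using least_power_le[where f=p and n="length cs"] least_powerI[where f=p and n="length cs"] by auto
    show ?thesis
    proof (rule ccontr)
      assume "least_power p ?x \<noteq> length cs"
      then have lt: "least_power p ?x < length cs" using le by simp
      then have "cs ! least_power p ?x = cs ! 0" using eq pw x by simp
      then show False using lt gt dist nth_eq_iff_index_eq by fastforce
    qed
  qed
  show ?thesis
    by (rule nth_equalityI) (auto simp: lp pw)
qed

lemma restrict_p: "perm_restrict p (S - set cs) = q"
  by (auto simp: fun_eq_iff perm_restrict_def p_out permutes_not_in[OF qp])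

end



lemma rev_props:
  assumes pS: "p permutes S" and fin: "finite S" and x: "x \<in> S"
  defines "cs \<equiv> support p x"
  shows "set cs = orbit p x" "distinct cs" "card (orbit p x) = length cs"
    "cs = x # tl cs" "set cs \<subseteq> S"
    "perm_restrict p (S - set cs) permutes (S - set cs)"
    "\<And>y. y \<in> S - set cs \<Longrightarrow> orbit (perm_restrict p (S - set cs)) y = orbit p y"
    "cycle_of_list cs \<circ> perm_restrict p (S - set cs) = p"
proof -
  have perm: "permutation p" using pS fin permutation_permutes by blast
  show so: "set cs = orbit p x"
    unfolding cs_def support_set[OF perm] orbit_altdef_permutation[OF perm] by auto
  show d: "distinct cs" unfolding cs_def by (rule cycle_of_permutation[OF perm])
  show "card (orbit p x) = length cs" using so d distinct_card by metis
  have lp: "least_power p x > 0" by (rule least_power_of_permutation(2)[OF perm])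
  then show "cs = x # tl cs" unfolding cs_def by (cases "least_power p x") (auto simp: upt_rec)
  show sub: "set cs \<subseteq> S" using so permutes_orbit_subset[OF pS x] by simp
  have cyc: "cyclic_on p (set cs)" using so cyclic_on_orbit[OF pS fin] by simp
  show qp: "perm_restrict p (S - set cs) permutes (S - set cs)"
    by (rule perm_restrict_diff_cyclic[OF pS cyc])
  have qin: "\<And>y. y \<in> S - set cs \<Longrightarrow> perm_restrict p (S - set cs) y \<in> S - set cs"
    using permutes_in_image[OF qp] by blast
  have pin: "\<And>y. y \<in> S - set cs \<Longrightarrow> p y \<in> S - set cs"
    by (metis qin perm_restrict_simps(1))
  show "orbit (perm_restrict p (S - set cs)) y = orbit p y" if y: "y \<in> S - set cs" for y
  proof (rule orbit_cong0[OF y])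
    show "perm_restrict p (S - set cs) \<in> S - set cs \<rightarrow> S - set cs" using qin by auto
    show "\<And>z. z \<in> S - set cs \<Longrightarrow> perm_restrict p (S - set cs) z = p z"
      by (simp add: perm_restrict_simps)
  qed
  show "cycle_of_list cs \<circ> perm_restrict p (S - set cs) = p"
  proof
    fix y
    show "(cycle_of_list cs \<circ> perm_restrict p (S - set cs)) y = p y"
    proof (cases "y \<in> set cs")
      case True
      then show ?thesis using cycle_restrict[OF perm, of y x]
        by (simp add: perm_restrict_simps cs_def)
    next
      case False
      have "perm_restrict p (S - set cs) y \<notin> set cs"
      proof (cases "y \<in> S")
        case True then show ?thesis using qin False by blast
      next
        case F: False then show ?thesis using False by (simp add: perm_restrict_simps)
      qed
      moreover have "perm_restrict p (S - set cs) y = p y"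
        using False by (cases "y \<in> S") (auto simp: perm_restrict_simps permutes_not_in[OF pS])
      ultimately show ?thesis by (simp add: id_outside_supp)
    qed
  qed
qed

definition Pk :: "'a set \<Rightarrow> 'a \<Rightarrow> nat \<Rightarrow> ('a \<Rightarrow> 'a) set" where
  "Pk S x k = {p \<in> OP S. card (orbit p x) = k}"

definition Lk :: "'a set \<Rightarrow> 'a \<Rightarrow> nat \<Rightarrow> 'a list set" where
  "Lk S x k = {l. length l = k - 1 \<and> distinct l \<and> set l \<subseteq> S - {x}}"

lemma Pk_bij:
  assumes fin: "finite S" and x: "x \<in> S" and k: "odd k"
  shows "bij_betw (\<lambda>(l, q). cycle_of_list (x # l) \<circ> q)
           (SIGMA l:Lk S x k. OP (S - set (x # l))) (Pk S x k)"
proof (rule bij_betw_byWitness[where f'="\<lambda>p. (tl (support p x), perm_restrict p (S - set (support p x)))"])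
  show "\<forall>a\<in>(SIGMA l:Lk S x k. OP (S - set (x # l))).
     (\<lambda>p. (tl (support p x), perm_restrict p (S - set (support p x)))) ((\<lambda>(l, q). cycle_of_list (x # l) \<circ> q) a) = a"
  proof
    fix a assume "a \<in> (SIGMA l:Lk S x k. OP (S - set (x # l)))"
    then obtain l q where a: "a = (l, q)" and l: "l \<in> Lk S x k" and q: "q \<in> OP (S - set (x # l))"
      by blast
    interpret glue S "x # l" q
      using l q fin x by unfold_locales (auto simp: Lk_def OP_def)
    have "support p x = x # l" using support_p by simp
    then show "(\<lambda>p. (tl (support p x), perm_restrict p (S - set (support p x)))) ((\<lambda>(l, q). cycle_of_list (x # l) \<circ> q) a) = a"
      using restrict_p by (simp add: p_def a)
  qed
  show "\<forall>a'\<in>Pk S x k. (\<lambda>(l, q). cycle_of_list (x # l) \<circ> q)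
          ((\<lambda>p. (tl (support p x), perm_restrict p (S - set (support p x)))) a') = a'"
  proof
    fix p assume "p \<in> Pk S x k"
    then have pS: "p permutes S" by (simp add: Pk_def OP_def)
    note R = rev_props[OF pS fin x]
    show "(\<lambda>(l, q). cycle_of_list (x # l) \<circ> q)
          ((\<lambda>p. (tl (support p x), perm_restrict p (S - set (support p x)))) p) = p"
      using R(4) R(8) by simp
  qed
  show "(\<lambda>(l, q). cycle_of_list (x # l) \<circ> q) ` (SIGMA l:Lk S x k. OP (S - set (x # l))) \<subseteq> Pk S x k"
  proof clarify
    fix l q assume l: "l \<in> Lk S x k" and q: "q \<in> OP (S - set (x # l))"
    interpret glue S "x # l" q
      using l q fin x by unfold_locales (auto simp: Lk_def OP_def)
    have len: "length (x # l) = k" using l k by (simp add: Lk_def)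
    have cardcs: "card (set (x # l)) = k" using len dist distinct_card by metis
    have "p \<in> Pk S x k"
      unfolding Pk_def OP_def
    proof (intro CollectI conjI ballI p_permutes)
      fix y assume y: "y \<in> S"
      show "odd (card (orbit p y))"
      proof (cases "y \<in> set (x # l)")
        case True then show ?thesis using orbit_p_in cardcs k by simp
      next
        case False then show ?thesis using orbit_p_out[of y] q y by (simp add: OP_def)
      qed
    next
      show "card (orbit p x) = k" using orbit_p_in[of x] cardcs by simp
    qed
    then show "cycle_of_list (x # l) \<circ> q \<in> Pk S x k" by (simp add: p_def)
  qed
  show "(\<lambda>p. (tl (support p x), perm_restrict p (S - set (support p x)))) ` Pk S x k
      \<subseteq> (SIGMA l:Lk S x k. OP (S - set (x # l)))"
  proof (rule image_subsetI)
    fix p assume p: "p \<in> Pk S x k"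
    then have pS: "p permutes S" and ok: "\<forall>y\<in>S. odd (card (orbit p y))" and ck: "card (orbit p x) = k"
      by (auto simp: Pk_def OP_def)
    note R = rev_props[OF pS fin x]
    let ?cs = "support p x"
    have e: "x # tl ?cs = ?cs" using R(4) by simp
    have d2: "distinct (x # tl ?cs)" using R(2) e by simp
    have s2: "set (x # tl ?cs) \<subseteq> S" using R(5) e by simp
    have l2: "length (x # tl ?cs) = k" using R(3) e ck by simp
    have "tl ?cs \<in> Lk S x k"
      using d2 s2 l2 unfolding Lk_def by auto
    moreover have "perm_restrict p (S - set ?cs) \<in> OP (S - set (x # tl ?cs))"
      unfolding e OP_def using R(6,7) ok by auto
    ultimately show "(tl ?cs, perm_restrict p (S - set ?cs)) \<in> (SIGMA l:Lk S x k. OP (S - set (x # l)))"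
      by simp
  qed
qed



fun aa :: "nat \<Rightarrow> real" where
  "aa 0 = 1"
| "aa (Suc m) = aa m * (2 * real m + 1) / (2 * real m + 2)"

definition rr :: "nat \<Rightarrow> real" where "rr n = aa (n div 2)"

lemma aa_pos: "aa m > 0"
  by (induction m) auto

lemma sum_rr_odd: "(\<Sum>j<Suc m. rr (2*m - 2*j)) = (2 * real m + 1) * rr (2*m+1)"
proof (induction m)
  case 0 then show ?case by (simp add: rr_def)
next
  case (Suc m)
  have "(\<Sum>j<Suc (Suc m). rr (2 * Suc m - 2 * j)) = rr (2 * Suc m) + (\<Sum>j<Suc m. rr (2*m - 2*j))"
    by (subst sum.lessThan_Suc_shift) simp
  also have "\<dots> = aa (Suc m) + (2 * real m + 1) * aa m"
    using Suc by (simp add: rr_def)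
  also have "\<dots> = (2 * real (Suc m) + 1) * rr (2 * Suc m + 1)"
    by (simp add: rr_def field_simps)
  finally show ?case .
qed

lemma sum_rr_even: "(\<Sum>j<Suc m. rr (2*m + 1 - 2*j)) = (2 * real m + 2) * rr (2*m+2)"
proof (induction m)
  case 0 then show ?case by (simp add: rr_def)
next
  case (Suc m)
  have "(\<Sum>j<Suc (Suc m). rr (2 * Suc m + 1 - 2 * j)) = rr (2 * Suc m + 1) + (\<Sum>j<Suc m. rr (2*m + 1 - 2*j))"
    by (subst sum.lessThan_Suc_shift) simp
  also have "\<dots> = aa (Suc m) + (2 * real m + 2) * aa (Suc m)"
    using Suc by (simp add: rr_def)
  also have "\<dots> = (2 * real (Suc m) + 2) * rr (2 * Suc m + 2)"
  proof -
    have "(2 * Suc m + 2) div 2 = Suc (Suc m)" by simp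
    then have e: "rr (2 * Suc m + 2) = aa (Suc m) * (2 * real (Suc m) + 1) / (2 * real (Suc m) + 2)"
      unfolding rr_def by (simp only: aa.simps(2))
    have h: "\<And>A::real. A + (2*real m + 2)*A = (2*real (Suc m)+2) * (A * (2*real (Suc m)+1)/(2*real(Suc m)+2))"
      by (simp add: field_simps)
    show ?thesis unfolding e by (rule h)
  qed
  finally show ?case .
qed

lemma odd_div_lt: "odd (c::nat) \<Longrightarrow> c \<le> n \<Longrightarrow> c div 2 < (n+1) div 2"
proof -
  assume "odd c" "c \<le> n"
  then obtain a where a: "c = 2*a+1" by (metis oddE)
  have "(2*a+2) div 2 \<le> (n+1) div 2" by (rule div_le_mono) (use \<open>c \<le> n\<close> a in simp)
  then show ?thesis using a by simp
qed

lemma sum_rr: assumes "n \<ge> 1"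
  shows "(\<Sum>j<(n+1) div 2. rr (n - Suc (2*j))) = real n * rr n"
proof (cases "even n")
  case True
  then obtain t where t: "n = 2*t" by blast
  define m where "m = t - 1"
  have m: "n = 2*m + 2" using t assms unfolding m_def by (cases t) auto
  have "(n+1) div 2 = Suc m" using m by simp
  moreover have "\<And>j. n - Suc (2*j) = 2*m + 1 - 2*j" using m by simp
  ultimately show ?thesis using sum_rr_even[of m] m by simp
next
  case False
  then obtain m where m: "n = 2*m + 1" by (rule oddE)
  have "(n+1) div 2 = Suc m" using m by simp
  moreover have "\<And>j. n - Suc (2*j) = 2*m - 2*j" using m by simp
  ultimately show ?thesis using sum_rr_odd[of m] m by simp
qed

lemma fact_split': "fact (m + j) = (fact m :: real) * real (\<Prod>{m+1..m+j})"
proof (induction j)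
  case (Suc j)
  have "{m+1..m + Suc j} = insert (m + Suc j) {m+1..m+j}" by auto
  then have "\<Prod>{m+1..m + Suc j} = (m + Suc j) * \<Prod>{m+1..m+j}" by simp
  then show ?case using Suc by (simp add: algebra_simps)
qed simp

lemma finite_OP: "finite S \<Longrightarrow> finite (OP S)"
  by (rule finite_subset[OF _ finite_permutations[of S]]) (auto simp: OP_def)

lemma card_Lk:
  assumes fin: "finite S" and x: "x \<in> S" and k: "1 \<le> k" "k \<le> card S"
  shows "real (card (Lk S x k)) * fact (card S - k) = fact (card S - 1)"
proof -
  have cS: "card (S - {x}) = card S - 1" using fin x by simp
  have "card (Lk S x k) = \<Prod>{card (S - {x}) - (k - 1) + 1 .. card (S - {x})}"
    unfolding Lk_def using card_lists_distinct_length_eq[of "S - {x}" "k - 1"] fin k cS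
    by (simp add: conj_commute)
  also have "\<dots> = \<Prod>{(card S - k) + 1 .. (card S - k) + (k - 1)}"
    using k cS by (simp add: Suc_diff_le)
  finally have "real (card (Lk S x k)) * fact (card S - k) = fact ((card S - k) + (k - 1))"
    by (simp add: fact_split' mult.commute)
  also have "(card S - k) + (k - 1) = card S - 1" using k by simp
  finally show ?thesis .
qed

lemma card_Pk:
  assumes fin: "finite S" and x: "x \<in> S" and k: "odd k" "k \<le> card S"
    and IH: "\<And>T. T \<subseteq> S \<Longrightarrow> card T < card S \<Longrightarrow> real (card (OP T)) = fact (card T) * rr (card T)"
  shows "real (card (Pk S x k)) = fact (card S - 1) * rr (card S - k)"
proof -
  have k1: "k \<ge> 1" using k by presburger
  have "card (Pk S x k) = card (SIGMA l:Lk S x k. OP (S - set (x # l)))"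
    using bij_betw_same_card[OF Pk_bij[OF fin x k(1)]] by simp
  also have "\<dots> = (\<Sum>l\<in>Lk S x k. card (OP (S - set (x # l))))"
  proof (rule card_SigmaI)
    show "finite (Lk S x k)"
      by (rule finite_subset[OF _ finite_lists_length_eq[of "S - {x}" "k - 1"]]) (use fin in \<open>auto simp: Lk_def\<close>)
    show "\<forall>a\<in>Lk S x k. finite (OP (S - set (x # a)))" using fin finite_OP by blast
  qed
  finally have "real (card (Pk S x k)) = (\<Sum>l\<in>Lk S x k. real (card (OP (S - set (x # l)))))"
    by simp
  also have "\<dots> = (\<Sum>l\<in>Lk S x k. fact (card S - k) * rr (card S - k))"
  proof (rule sum.cong[OF refl])
    fix l assume l: "l \<in> Lk S x k"
    then have d: "distinct (x # l)" and s: "set (x # l) \<subseteq> S" and len: "length (x # l) = k"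
      using x k1 by (auto simp: Lk_def)
    have "card (S - set (x # l)) = card S - card (set (x # l))"
      by (rule card_Diff_subset[OF List.finite_set s])
    then have c: "card (S - set (x # l)) = card S - k"
      using distinct_card[OF d] len by simp
    show "real (card (OP (S - set (x # l)))) = fact (card S - k) * rr (card S - k)"
      using IH[of "S - set (x # l)"] c k1 k by (simp add: Diff_subset)
  qed
  also have "\<dots> = real (card (Lk S x k)) * fact (card S - k) * rr (card S - k)"
    by simp
  also have "\<dots> = fact (card S - 1) * rr (card S - k)"
    using card_Lk[OF fin x k1 k(2)] by simp
  finally show ?thesis .
qed

lemma card_OP: "finite S \<Longrightarrow> real (card (OP S)) = fact (card S) * rr (card S)"
proof (induction "card S" arbitrary: S rule: less_induct)
  case less
  show ?case
  proof (cases "S = {}")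
    case True
    have "OP S = {id}" using True by (auto simp: OP_def)
    then show ?thesis using True by (simp add: rr_def)
  next
    case False
    then obtain x where x: "x \<in> S" by blast
    define n where "n = card S"
    have "card S > 0" using less.prems False by (simp add: card_gt_0_iff)
    then have n1: "n \<ge> 1" using n_def by simp
    have U: "OP S = (\<Union>j\<in>{..<(n+1) div 2}. Pk S x (2*j+1))"
    proof (intro set_eqI iffI)
      fix p assume p: "p \<in> OP S"
      then have pS: "p permutes S" and od: "odd (card (orbit p x))" using x by (auto simp: OP_def)
      have "card (orbit p x) \<le> n"
        using card_mono[OF less.prems permutes_orbit_subset[OF pS x]] n_def by simp
      then have "card (orbit p x) div 2 < (n+1) div 2" using od odd_div_lt by blast
      moreover have "card (orbit p x) = 2 * (card (orbit p x) div 2) + 1" using odd_two_times_div_two_succ[OF od] by simp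
      ultimately show "p \<in> (\<Union>j\<in>{..<(n+1) div 2}. Pk S x (2*j+1))"
        using p by (auto simp: Pk_def)
    qed (auto simp: Pk_def)
    have "real (card (OP S)) = real (\<Sum>j<(n+1) div 2. card (Pk S x (2*j+1)))"
      unfolding U
      by (subst card_UN_disjoint) (auto simp: Pk_def intro: finite_subset[OF _ finite_OP[OF less.prems]])
    also have "\<dots> = (\<Sum>j<(n+1) div 2. fact (n - 1) * rr (n - Suc (2*j)))"
      unfolding of_nat_sum
    proof (rule sum.cong[OF refl])
      fix j assume j: "j \<in> {..<(n+1) div 2}"
      have le: "2*j+1 \<le> card S" using j n_def by auto
      have IH: "\<And>T. T \<subseteq> S \<Longrightarrow> card T < card S \<Longrightarrow> real (card (OP T)) = fact (card T) * rr (card T)"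
        using less.hyps less.prems finite_subset by blast
      have "odd (2*j+1)" by simp
      from card_Pk[OF less.prems x this le IH]
      show "real (card (Pk S x (2*j+1))) = fact (n - 1) * rr (n - Suc (2*j))"
        using n_def by simp
    qed
    also have "\<dots> = fact (n - 1) * (real n * rr n)"
      unfolding sum_distrib_left[symmetric] using sum_rr[OF n1] by simp
    also have "\<dots> = fact n * rr n"
    proof -
      have "(fact n :: real) = real n * fact (n - 1)" using n1 by (simp add: fact_reduce)
      then show ?thesis by simp
    qed
    finally show ?thesis using n_def by simp
  qed
qed



lemma card_filter_sum: "finite A \<Longrightarrow> real (card {y\<in>A. P y}) = (\<Sum>y\<in>A. if P y then 1 else 0)"
proof -
  assume f: "finite A"
  have "(\<Sum>y\<in>A. if P y then (1::real) else 0) = (\<Sum>y\<in>{y\<in>A. P y}. 1)"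
    by (rule sum.inter_filter[OF f, symmetric])
  then show ?thesis by simp
qed

lemma sumY:
  assumes k: "odd k" "k \<le> n"
  shows "(\<Sum>p\<in>OP {1..n}. real (card {y\<in>{1..n}. card (orbit p y) = k})) = fact n * rr (n - k)"
proof -
  let ?S = "{1..n::nat}"
  have fO: "finite (OP ?S)" by (rule finite_OP) simp
  have "(\<Sum>p\<in>OP ?S. real (card {y\<in>?S. card (orbit p y) = k}))
      = (\<Sum>p\<in>OP ?S. \<Sum>y\<in>?S. if card (orbit p y) = k then 1 else 0)"
    by (rule sum.cong[OF refl]) (rule card_filter_sum, simp)
  also have "\<dots> = (\<Sum>y\<in>?S. \<Sum>p\<in>OP ?S. if card (orbit p y) = k then 1 else 0)"
    by (rule sum.swap)
  also have "\<dots> = (\<Sum>y\<in>?S. real (card (Pk ?S y k)))"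
    unfolding Pk_def by (rule sum.cong[OF refl]) (rule card_filter_sum[OF fO, symmetric])
  also have "\<dots> = (\<Sum>y\<in>?S. fact (n - 1) * rr (n - k))"
  proof (rule sum.cong[OF refl])
    fix y assume y: "y \<in> ?S"
    have IH: "\<And>T. T \<subseteq> ?S \<Longrightarrow> card T < card ?S \<Longrightarrow> real (card (OP T)) = fact (card T) * rr (card T)"
      using card_OP finite_subset by blast
    show "real (card (Pk ?S y k)) = fact (n - 1) * rr (n - k)"
      using card_Pk[OF _ y k(1) _ IH] k by simp
  qed
  also have "\<dots> = real n * fact (n - 1) * rr (n - k)" by simp
  also have "\<dots> = fact n * rr (n - k)"
  proof (cases n)
    case (Suc m) then show ?thesis by simp
  qed (use k in simp)
  finally show ?thesis .
qed

lemma aa_ratio: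
  "t \<le> m \<Longrightarrow> aa (m - t) / aa m = (\<Prod>j<t. (2*real m - 2*real j) / (2*real m - 2*real j - 1))"
proof (induction t)
  case 0 then show ?case using aa_pos[of m] by simp
next
  case (Suc t)
  define d where "d = m - Suc t"
  have md: "m - t = Suc d" using Suc.prems d_def by simp
  have rd: "real d = real m - real t - 1" using Suc.prems d_def by simp
  have g: "\<And>A B C::real. B \<noteq> 0 \<Longrightarrow> A / C = (A / B) * (B / C)" by (simp add: field_simps)
  have "aa d / aa m = (aa d / aa (Suc d)) * (aa (Suc d) / aa m)"
    by (rule g) (use aa_pos[of "Suc d"] in linarith)
  then have "aa (m - Suc t) / aa m = (aa d / aa (Suc d)) * (aa (m - t) / aa m)"
    unfolding md d_def .
  also have "aa d / aa (Suc d) = (2*real m - 2*real t) / (2*real m - 2*real t - 1)"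
  proof -
    have gen: "\<And>A a b::real. A \<noteq> 0 \<Longrightarrow> a \<noteq> 0 \<Longrightarrow> b \<noteq> 0 \<Longrightarrow>
        A / (A*a/b) = b/a"
      by (simp add: field_simps)
    have e: "aa (Suc d) = aa d * (2*real d+1)/(2*real d+2)" by simp
    have h1: "aa d / aa (Suc d) = (2*real d + 2)/(2*real d + 1)"
      unfolding e by (rule gen) (use aa_pos[of d] in \<open>auto simp: add_nonneg_eq_0_iff\<close>)
    have q1: "2*real m - 2*real t = 2*real d + 2" and q2: "2*real m - 2*real t - 1 = 2*real d + 1"
      using rd by simp_all
    show ?thesis unfolding q2 q1 h1 by (simp add: algebra_simps)
  qed
  also have "aa (m - t) / aa m = (\<Prod>j<t. (2*real m - 2*real j) / (2*real m - 2*real j - 1))"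
    using Suc by simp
  finally show ?case by (simp add: mult.commute)
qed

theorem proposition3p2:
  fixes n k :: nat
  assumes "n \<ge> 1" and "odd k" and "k \<le> n"
  shows "E_odd n (\<lambda>p. real (Y n k p)) =
    (if even n
     then (\<Prod>j<(k+1) div 2. real n - 2 * real j) / (\<Prod>j<(k+1) div 2. real n - 1 - 2 * real j)
     else (\<Prod>j<(k-1) div 2. real n - 1 - 2 * real j) / (\<Prod>j<(k-1) div 2. real n - 2 - 2 * real j))"
proof -
  have op: "odd_perms n = OP {1..n}" by (simp add: odd_perms_def OP_def)
  have E: "E_odd n (\<lambda>p. real (Y n k p)) = rr (n - k) / rr n"
  proof -
    have "E_odd n (\<lambda>p. real (Y n k p)) = fact n * rr (n - k) / (fact n * rr n)"
      unfolding E_odd_def op Y_def using sumY[OF assms(2,3)] card_OP[of "{1..n}"] by simp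
    then show ?thesis by simp
  qed
  obtain i where i: "k = 2*i + 1" using assms(2) by (metis oddE)
  show ?thesis
  proof (cases "even n")
    case True
    then obtain m where m: "n = 2*m" by blast
    have im: "i + 1 \<le> m" using assms(3) i m True by presburger
    have k1: "(k+1) div 2 = i + 1" using i by simp
    have "n - k = 2*(m - (i+1)) + 1" using i m im by linarith
    then have r1: "rr (n - k) = aa (m - (i+1))" unfolding rr_def by simp
    have r2: "rr n = aa m" unfolding rr_def m by simp
    have "rr (n - k) / rr n = (\<Prod>j<i+1. (2*real m - 2*real j) / (2*real m - 2*real j - 1))"
      using aa_ratio[OF im] r1 r2 by simp
    also have "\<dots> = (\<Prod>j<i+1. (real n - 2 * real j) / (real n - 1 - 2 * real j))"
      using m by (simp add: algebra_simps)
    also have "\<dots> = (\<Prod>j<(k+1) div 2. real n - 2 * real j) / (\<Prod>j<(k+1) div 2. real n - 1 - 2 * real j)"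
      unfolding k1 by (rule prod_dividef)
    finally show ?thesis using E True by simp
  next
    case False
    then obtain m where m: "n = 2*m + 1" by (metis oddE)
    have im: "i \<le> m" using assms(3) i m by simp
    have k1: "(k-1) div 2 = i" using i by simp
    have "n - k = 2*(m - i)" using i m im by simp
    then have r1: "rr (n - k) = aa (m - i)" unfolding rr_def by simp
    have r2: "rr n = aa m" unfolding rr_def m by simp
    have "rr (n - k) / rr n = (\<Prod>j<i. (2*real m - 2*real j) / (2*real m - 2*real j - 1))"
      using aa_ratio[OF im] r1 r2 by simp
    also have "\<dots> = (\<Prod>j<i. (real n - 1 - 2 * real j) / (real n - 2 - 2 * real j))"
      using m by (simp add: algebra_simps)
    also have "\<dots> = (\<Prod>j<(k-1) div 2. real n - 1 - 2 * real j) / (\<Prod>j<(k-1) div 2. real n - 2 - 2 * real j)"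
      unfolding k1 by (rule prod_dividef)
    finally show ?thesis using E False by simp
  qed
qed


end
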